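(* For every integer $n>61$ there is no balanced permutation sequence of length $n$. In particular, only finitely many positive integers $n$ admit a balanced permutation sequence of length $n$.
   Context: Let $n$ be a positive integer, $N$ a set of $n$ players and $[n]=\{1,\ldots,n\}$ a set of $n$ items. A permutation sequence of length $n$ is an ordered tuple $(\pi_1,\ldots,\pi_n)$ of bijections $\pi_t : N\to[n]$; on day $t$ player $i$ receives item $\pi_t(i)$. For $t\in[n]$ and $i\in N$, $Z_i^t$ is the multiset $\{\pi_1(i),\ldots,\pi_t(i)\}$, and for $j\in[t]$, $Z_i^t[j]$ is the $j$-th smallest element of $Z_i^t$ (counted with multiplicity). The sequence is called balanced if for every $t\in[n]$, every $i\in N$ and every $j\in[t]$: $Z_i^t[j]\le \lceil jn/t\rceil$. *)

theory Defs
  imports Complex_Main "HOL-Library.Multiset"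
begin

(* A permutation sequence of length n on player set N: days t = 1..n,
   pi t : N -> {1..n} a bijection; on day t player i gets item pi t i. *)
definition perm_seq :: "'a set \<Rightarrow> nat \<Rightarrow> (nat \<Rightarrow> 'a \<Rightarrow> nat) \<Rightarrow> bool" where
  "perm_seq N n \<pi> \<longleftrightarrow> finite N \<and> card N = n \<and> (\<forall>t\<in>{1..n}. bij_betw (\<pi> t) N {1..n})"

definition Z :: "(nat \<Rightarrow> 'a \<Rightarrow> nat) \<Rightarrow> 'a \<Rightarrow> nat \<Rightarrow> nat multiset" where
  "Z \<pi> i t = image_mset (\<lambda>s. \<pi> s i) (mset_set {1..t})"

definition Zj :: "(nat \<Rightarrow> 'a \<Rightarrow> nat) \<Rightarrow> 'a \<Rightarrow> nat \<Rightarrow> nat \<Rightarrow> nat" where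
  "Zj \<pi> i t j = sorted_list_of_multiset (Z \<pi> i t) ! (j - 1)"

definition balanced :: "'a set \<Rightarrow> nat \<Rightarrow> (nat \<Rightarrow> 'a \<Rightarrow> nat) \<Rightarrow> bool" where
  "balanced N n \<pi> \<longleftrightarrow> perm_seq N n \<pi> \<and>
     (\<forall>t\<in>{1..n}. \<forall>i\<in>N. \<forall>j\<in>{1..t}.
        real (Zj \<pi> i t j) \<le> real_of_int \<lceil>real j * real n / real t\<rceil>)"

end

theory Submission
  imports Defs
begin

lemma sorted_nth_count:
  fixes L :: "nat list"
  assumes "sorted L" "1 \<le> j" "j \<le> length L" "L ! (j-1) \<le> v"
  shows "j \<le> length (filter (\<lambda>x. x \<le> v) L)"
proof -
  have all: "\<forall>x\<in>set (take j L). x \<le> v"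
  proof
    fix x assume "x \<in> set (take j L)"
    then obtain k where k: "k < length (take j L)" "x = take j L ! k" by (metis in_set_conv_nth)
    then have "k < j" "x = L ! k" by auto
    moreover have "L ! k \<le> L ! (j-1)" using assms \<open>k < j\<close> by (intro sorted_nth_mono) auto
    ultimately show "x \<le> v" using assms(4) by simp
  qed
  have "filter (\<lambda>x. x \<le> v) (take j L) = take j L" using all by simp
  then have "length (filter (\<lambda>x. x \<le> v) (take j L)) = j" using assms by simp
  moreover have "filter (\<lambda>x. x \<le> v) L = filter (\<lambda>x. x \<le> v) (take j L) @ filter (\<lambda>x. x \<le> v) (drop j L)"
    by (metis append_take_drop_id filter_append)
  ultimately show ?thesis by simp
qed

lemma Z_count:
  "size (filter_mset (\<lambda>x. x \<le> v) (Z \<pi> i t)) = card {s\<in>{1..t}. \<pi> s i \<le> v}"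
  unfolding Z_def
  by (simp add: filter_mset_image_mset)

lemma len_filter_sorted:
  "length (filter P (sorted_list_of_multiset M)) = size (filter_mset P M)"
  by (metis mset_filter mset_sorted_list_of_multiset size_mset)

lemma count_from_balanced:
  assumes "balanced N n \<pi>" "t \<in> {1..n}" "i \<in> N" "j \<in> {1..t}"
  shows "j \<le> card {s\<in>{1..t}. \<pi> s i \<le> nat \<lceil>real j * real n / real t\<rceil>}"
proof -
  let ?c = "\<lceil>real j * real n / real t\<rceil>"
  have "real (Zj \<pi> i t j) \<le> real_of_int ?c" using assms unfolding balanced_def by blast
  then have le: "Zj \<pi> i t j \<le> nat ?c" by linarith
  let ?L = "sorted_list_of_multiset (Z \<pi> i t)"
  have "length ?L = size (Z \<pi> i t)" by (metis mset_sorted_list_of_multiset size_mset)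
  then have len: "length ?L = t" unfolding Z_def by simp
  have "j \<le> length (filter (\<lambda>x. x \<le> nat ?c) ?L)"
    using sorted_nth_count[of ?L j "nat ?c"] le assms(4) len unfolding Zj_def by simp
  then show ?thesis using len_filter_sorted Z_count by metis
qed

lemma day_count:
  assumes "bij_betw f N {1..n}" "v \<le> n"
  shows "card {i\<in>N. f i \<le> v} = v"
proof -
  have inj: "inj_on f {i\<in>N. f i \<le> v}" using assms(1) unfolding bij_betw_def by (auto intro: inj_on_subset)
  have "f ` {i\<in>N. f i \<le> v} = {1..v}"
  proof
    show "f ` {i \<in> N. f i \<le> v} \<subseteq> {1..v}" using assms(1) unfolding bij_betw_def by auto
    show "{1..v} \<subseteq> f ` {i \<in> N. f i \<le> v}"
    proof
      fix x assume x: "x \<in> {1..v}"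
      then have "x \<in> f ` N" using assms unfolding bij_betw_def by auto
      then obtain i where "i \<in> N" "x = f i" by auto
      then show "x \<in> f ` {i \<in> N. f i \<le> v}" using x by auto
    qed
  qed
  then show ?thesis using card_image[OF inj] by simp
qed

lemma sum_card_swap:
  assumes "finite N" "finite S"
  shows "(\<Sum>i\<in>N. card {s\<in>S. P s i}) = (\<Sum>s\<in>S. card {i\<in>N. P s i})"
proof -
  have "(\<Sum>i\<in>N. card {s\<in>S. P s i}) = (\<Sum>i\<in>N. \<Sum>s\<in>S. if P s i then 1 else 0)"
    using assms by (auto intro!: sum.cong arg_cong[where f=card] simp: sum.If_cases)
  also have "\<dots> = (\<Sum>s\<in>S. \<Sum>i\<in>N. if P s i then 1 else 0)" by (rule sum.swap)
  also have "\<dots> = (\<Sum>s\<in>S. card {i\<in>N. P s i})"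
    using assms by (auto intro!: sum.cong arg_cong[where f=card] simp: sum.If_cases)
  finally show ?thesis .
qed

lemma no_balanced:
  assumes "n > 61" "balanced N n \<pi>"
  shows False
proof -
  have ps: "perm_seq N n \<pi>" using assms(2) unfolding balanced_def by blast
  have finN: "finite N" and cardN: "card N = n" and bij: "\<And>t. t \<in> {1..n} \<Longrightarrow> bij_betw (\<pi> t) N {1..n}"
    using ps unfolding perm_seq_def by auto
  define C where "C i t v = card {s\<in>{1..t}. \<pi> s i \<le> v}" for i t v
  have sumC: "(\<Sum>i\<in>N. C i t v) = t * v" if "t \<le> n" "v \<le> n" for t v
  proof -
    have "(\<Sum>i\<in>N. C i t v) = (\<Sum>s\<in>{1..t}. card {i\<in>N. \<pi> s i \<le> v})"
      unfolding C_def using finN by (intro sum_card_swap) auto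
    also have "\<dots> = (\<Sum>s\<in>{1..t}. v)"
    proof (rule sum.cong[OF refl])
      fix s assume "s \<in> {1..t}"
      then have "s \<in> {1..n}" using that by auto
      then show "card {i\<in>N. \<pi> s i \<le> v} = v" using day_count[OF bij] that by auto
    qed
    finally show ?thesis by simp
  qed
  define a where "a = nat \<lceil>real n / 4\<rceil>"
  define b where "b = nat \<lceil>real n / 3\<rceil>"
  define h where "h = nat \<lceil>real n / 2\<rceil>"
  have ra: "real n / 4 \<le> real a" "real a < real n / 4 + 1" unfolding a_def
    using le_of_int_ceiling[of "real n / 4"] ceiling_correct[of "real n / 4"] by (auto simp: of_nat_nat)
  have rb: "real n / 3 \<le> real b" "real b < real n / 3 + 1" unfolding b_def
    using le_of_int_ceiling[of "real n / 3"] ceiling_correct[of "real n / 3"] by (auto simp: of_nat_nat)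
  have rh: "real n / 2 \<le> real h" "real h < real n / 2 + 1" unfolding h_def
    using le_of_int_ceiling[of "real n / 2"] ceiling_correct[of "real n / 2"] by (auto simp: of_nat_nat)
  have ab: "a \<le> b" unfolding a_def b_def by (intro nat_mono ceiling_mono) (auto simp: divide_simps)
  have bh: "b \<le> h" unfolding b_def h_def by (intro nat_mono ceiling_mono) (auto simp: divide_simps)
  have hn: "h \<le> n" using rh assms(1) by linarith
  have c31: "1 \<le> C i 3 b" if "i \<in> N" for i
    using count_from_balanced[OF assms(2), of 3 i 1] that assms(1) unfolding C_def b_def by simp
  have e2: "2 * real n / 4 = real n / 2" by simp
  have c42: "2 \<le> C i 4 h" if "i \<in> N" for i
    using count_from_balanced[OF assms(2), of 4 i 2] that assms(1) unfolding C_def h_def by (simp add: e2)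
  have c41: "1 \<le> C i 4 a" if "i \<in> N" for i
    using count_from_balanced[OF assms(2), of 4 i 1] that assms(1) unfolding C_def a_def by simp
  have c21: "1 \<le> C i 2 h" if "i \<in> N" for i
    using count_from_balanced[OF assms(2), of 2 i 1] that assms(1) unfolding C_def h_def by simp
  define P where "P = {i\<in>N. a < \<pi> 3 i \<and> \<pi> 3 i \<le> b}"
  define X where "X = {i\<in>P. 2 \<le> C i 3 b}"
  define Y where "Y = {i\<in>P. 3 \<le> C i 4 h}"
  have b3: "bij_betw (\<pi> 3) N {1..n}" using bij assms(1) by auto
  have "P = {i\<in>N. \<pi> 3 i \<le> b} - {i\<in>N. \<pi> 3 i \<le> a}" unfolding P_def by auto
  moreover have "{i\<in>N. \<pi> 3 i \<le> a} \<subseteq> {i\<in>N. \<pi> 3 i \<le> b}" using ab by auto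
  ultimately have cardP: "card P = b - a"
    using card_Diff_subset[of "{i\<in>N. \<pi> 3 i \<le> a}" "{i\<in>N. \<pi> 3 i \<le> b}"] finN ab bh hn
      day_count[OF b3, of a] day_count[OF b3, of b] by auto
  have PXY: "P \<subseteq> X \<union> Y"
  proof
    fix i assume iP: "i \<in> P"
    then have iN: "i \<in> N" and p3: "a < \<pi> 3 i" "\<pi> 3 i \<le> b" unfolding P_def by auto
    show "i \<in> X \<union> Y"
    proof (cases "2 \<le> C i 3 b")
      case True then show ?thesis using iP unfolding X_def by auto
    next
      case False
      have p1: "b < \<pi> 1 i"
      proof (rule ccontr)
        assume "\<not> b < \<pi> 1 i"
        then have "{1,3} \<subseteq> {s\<in>{1..3}. \<pi> s i \<le> b}" using p3 by auto
        then have "card {1::nat,3} \<le> C i 3 b" unfolding C_def by (intro card_mono) auto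
        then show False using False by simp
      qed
      have p2: "b < \<pi> 2 i"
      proof (rule ccontr)
        assume "\<not> b < \<pi> 2 i"
        then have "{2,3} \<subseteq> {s\<in>{1..3}. \<pi> s i \<le> b}" using p3 by auto
        then have "card {2::nat,3} \<le> C i 3 b" unfolding C_def by (intro card_mono) auto
        then show False using False by simp
      qed
      have "{s\<in>{1..4}. \<pi> s i \<le> a} \<noteq> {}" using c41[OF iN] unfolding C_def by (metis card.empty not_one_le_zero)
      then obtain s where s: "s \<in> {1..4}" "\<pi> s i \<le> a" by auto
      have "s \<noteq> 1" "s \<noteq> 2" "s \<noteq> 3" using s p1 p2 p3 ab by auto
      then have s4: "s = 4" using s by auto
      have "{s\<in>{1..2}. \<pi> s i \<le> h} \<noteq> {}" using c21[OF iN] unfolding C_def by (metis card.empty not_one_le_zero)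
      then obtain r where r: "r \<in> {1..2}" "\<pi> r i \<le> h" by auto
      have "{r,3,4} \<subseteq> {s\<in>{1..4}. \<pi> s i \<le> h}" using r s s4 p3 ab bh by auto
      then have "card {r,3,4} \<le> C i 4 h" unfolding C_def by (intro card_mono) auto
      moreover have "card {r,3::nat,4} = 3" using r by auto
      ultimately show ?thesis using iP unfolding Y_def by auto
    qed
  qed
  have finP: "finite P" using finN unfolding P_def by auto
  have XN: "X \<subseteq> N" "Y \<subseteq> N" unfolding X_def Y_def P_def by auto
  have "card P \<le> card X + card Y"
    using card_mono[OF _ PXY] card_Un_le[of X Y] finP XN finN by (meson finite_subset finite_UnI le_trans)
  have sX: "n + card X \<le> 3 * b"
  proof -
    have "(\<Sum>i\<in>N. 1 + (if i \<in> X then 1 else 0)) \<le> (\<Sum>i\<in>N. C i 3 b)"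
    proof (rule sum_mono)
      fix i assume "i \<in> N" then show "1 + (if i \<in> X then 1 else 0) \<le> C i 3 b"
        using c31 unfolding X_def by auto
    qed
    also have "\<dots> = 3 * b" using sumC[of 3 b] assms(1) bh hn by auto
    finally have le: "(\<Sum>i\<in>N. 1 + (if i \<in> X then 1 else 0)) \<le> 3 * b" .
    have "(\<Sum>i\<in>N. (1::nat) + (if i \<in> X then 1 else 0)) = (\<Sum>i\<in>N. 1) + (\<Sum>i\<in>N. if i \<in> X then 1 else 0)"
      by (rule sum.distrib)
    moreover have "(\<Sum>i\<in>N. if i \<in> X then (1::nat) else 0) = card (N \<inter> X)"
      using finN by (simp add: sum.inter_restrict[symmetric])
    moreover have "N \<inter> X = X" using XN by auto
    ultimately show ?thesis using le cardN by simp
  qed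
  have sY: "2 * n + card Y \<le> 4 * h"
  proof -
    have "(\<Sum>i\<in>N. 2 + (if i \<in> Y then 1 else 0)) \<le> (\<Sum>i\<in>N. C i 4 h)"
    proof (rule sum_mono)
      fix i assume iN: "i \<in> N" show "2 + (if i \<in> Y then 1 else 0) \<le> C i 4 h"
        using c42[OF iN] unfolding Y_def by (cases "i \<in> Y") (auto simp: Y_def)
    qed
    also have "\<dots> = 4 * h" using sumC[of 4 h] assms(1) hn by auto
    finally have le: "(\<Sum>i\<in>N. 2 + (if i \<in> Y then 1 else 0)) \<le> 4 * h" .
    have "(\<Sum>i\<in>N. (2::nat) + (if i \<in> Y then 1 else 0)) = (\<Sum>i\<in>N. 2) + (\<Sum>i\<in>N. if i \<in> Y then 1 else 0)"
      by (rule sum.distrib)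
    moreover have "(\<Sum>i\<in>N. if i \<in> Y then (1::nat) else 0) = card (N \<inter> Y)"
      using finN by (simp add: sum.inter_restrict[symmetric])
    moreover have "N \<inter> Y = Y" using XN by auto
    ultimately show ?thesis using le cardN by simp
  qed
  have "real (4 * a) < real (n + 4)" "real (3 * b) < real (n + 3)" "real (2 * h) < real (n + 2)"
    using ra rb rh by auto
  then have "4 * a < n + 4" "3 * b < n + 3" "2 * h < n + 2" by (simp_all only: of_nat_less_iff)
  then show False using \<open>card P \<le> card X + card Y\<close> cardP sX sY ab assms(1) by linarith
qed

theorem mainTheorem4:
  "(\<forall>(n::nat) (N::'a set) \<pi>. n > 61 \<longrightarrow> \<not> balanced N n \<pi>) \<and>
   finite {n::nat. n > 0 \<and> (\<exists>(N::'a set) \<pi>. balanced N n \<pi>)}"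
proof
  show "\<forall>(n::nat) (N::'a set) \<pi>. n > 61 \<longrightarrow> \<not> balanced N n \<pi>"
    using no_balanced by blast
  have "{n::nat. n > 0 \<and> (\<exists>(N::'a set) \<pi>. balanced N n \<pi>)} \<subseteq> {..61}"
    using no_balanced by (auto simp: not_less[symmetric])
  then show "finite {n::nat. n > 0 \<and> (\<exists>(N::'a set) \<pi>. balanced N n \<pi>)}"
    using finite_subset by blast
qed

end
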